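(* Let $\mu$ be a finitely supported probability measure on $\mathrm{Homeo}_+(\mathbb{R})$ whose random dynamical system is recurrent. Then there exists a nonzero Radon measure $\nu$ on $\mathbb{R}$ (finite on compact sets) that is stationary for $\mu$.
   Context: Let $\mu$ be supported on $\{f_1,\dots,f_k\}\subset\mathrm{Homeo}_+(\mathbb{R})$ with $p_i=\mu(\{f_i\})>0$. Let $g_1,g_2,\dots$ be i.i.d. with law $\mu$ and $F_n=g_n\circ\cdots\circ g_1$. The system is recurrent if there is a compact interval $J\subset\mathbb{R}$ such that for every $x\in\mathbb{R}$, almost surely $F_n(x)\in J$ for infinitely many $n$. A Borel measure $\nu$ on $\mathbb{R}$ is stationary for $\mu$ if $\nu(A)=\sum_i p_i\,\nu(f_i^{-1}(A))$ for every Borel set $A$. *)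

theory Defs
  imports "HOL-Probability.Probability"
begin

definition homeo_plus :: "(real \<Rightarrow> real) \<Rightarrow> bool" where
  "homeo_plus f \<longleftrightarrow> strict_mono f \<and> (\<exists>g. homeomorphism UNIV UNIV f g)"

text \<open>Random composition F_n = g_n o ... o g_1, where g_(i+1) is the i-th entry of the stream.\<close>
primrec rcomp :: "nat \<Rightarrow> (real \<Rightarrow> real) stream \<Rightarrow> real \<Rightarrow> real" where
  "rcomp 0 \<omega> = id"
| "rcomp (Suc n) \<omega> = (\<omega> !! n) \<circ> rcomp n \<omega>"

definition recurrent :: "(real \<Rightarrow> real) pmf \<Rightarrow> bool" where
  "recurrent \<mu> \<longleftrightarrow> (\<exists>a b. a \<le> b \<and> (\<forall>x.
      AE \<omega> in stream_space (measure_pmf \<mu>). (\<exists>\<^sub>\<infinity> n. rcomp n \<omega> x \<in> {a..b})))"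

definition stationary :: "(real \<Rightarrow> real) pmf \<Rightarrow> real measure \<Rightarrow> bool" where
  "stationary \<mu> \<nu> \<longleftrightarrow> (\<forall>A \<in> sets borel.
      emeasure \<nu> A = (\<Sum>f\<in>set_pmf \<mu>. ennreal (pmf \<mu> f) * emeasure \<nu> (f -` A)))"

end

theory Submission
  imports Defs "HOL-Library.Diagonal_Subsequence"
begin


primrec Wp :: "(real \<Rightarrow> real) pmf \<Rightarrow> nat \<Rightarrow> (real \<Rightarrow> real) pmf" where
  "Wp \<mu> 0 = return_pmf id"
| "Wp \<mu> (Suc n) = bind_pmf (Wp \<mu> n) (\<lambda>h. map_pmf (\<lambda>f. f \<circ> h) \<mu>)"

lemma Wp_add: "Wp \<mu> (n + j) = bind_pmf (Wp \<mu> n) (\<lambda>h. map_pmf (\<lambda>g. g \<circ> h) (Wp \<mu> j))"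
proof (induction j)
  case 0
  then show ?case by (simp add: map_return_pmf bind_return_pmf')
next
  case (Suc j)
  show ?case
    by (simp add: Suc bind_assoc_pmf bind_map_pmf map_bind_pmf map_pmf_comp o_assoc comp_def)
qed

lemma Wp_Suc0[simp]: "Wp \<mu> (Suc 0) = \<mu>"
proof -
  have "Wp \<mu> (Suc 0) = map_pmf (\<lambda>f. f \<circ> id) \<mu>" by (simp add: bind_return_pmf)
  also have "(\<lambda>f::real\<Rightarrow>real. f \<circ> id) = id" by auto
  finally show ?thesis by simp
qed
lemma Wp_1: "Wp \<mu> 1 = \<mu>" by (metis One_nat_def Wp_Suc0)

lemma finite_Wp: "finite (set_pmf \<mu>) \<Longrightarrow> finite (set_pmf (Wp \<mu> n))"
  by (induction n) auto

lemma cont_Wp: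
  assumes "\<forall>f\<in>set_pmf \<mu>. continuous_on UNIV f"
  shows "h \<in> set_pmf (Wp \<mu> n) \<Longrightarrow> continuous_on UNIV h"
proof (induction n arbitrary: h)
  case 0 then show ?case by (simp add: id_def)
next
  case (Suc n)
  then obtain h' f where "h' \<in> set_pmf (Wp \<mu> n)" "f \<in> set_pmf \<mu>" "h = f \<circ> h'" by auto
  then show ?case using Suc assms
    by (metis continuous_on_compose continuous_on_subset top_greatest)
qed

lemma rcomp_in_Wp: "(\<forall>k. \<omega> !! k \<in> set_pmf \<mu>) \<Longrightarrow> rcomp n \<omega> \<in> set_pmf (Wp \<mu> n)"
  by (induction n) auto

lemma rcomp_Suc': "rcomp (Suc n) \<omega> = rcomp n (stl \<omega>) \<circ> shd \<omega>"
proof (induction n arbitrary: \<omega>)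
  case 0 then show ?case by simp
next
  case (Suc n)
  have "rcomp (Suc (Suc n)) \<omega> = \<omega> !! Suc n \<circ> rcomp (Suc n) \<omega>" by simp
  also have "\<dots> = stl \<omega> !! n \<circ> (rcomp n (stl \<omega>) \<circ> shd \<omega>)" by (simp only: Suc.IH snth.simps)
  also have "\<dots> = rcomp (Suc n) (stl \<omega>) \<circ> shd \<omega>" by (simp add: o_assoc)
  finally show ?case .
qed

lemma prob_sum: "finite (set_pmf p) \<Longrightarrow>
   measure_pmf.prob p B = (\<Sum>a\<in>set_pmf p. pmf p a * indicator B a)"
proof -
  assume fin: "finite (set_pmf p)"
  have "measure_pmf.prob p B = measure_pmf.prob p (B \<inter> set_pmf p)"
    by (simp add: measure_Int_set_pmf)
  also have "\<dots> = sum (pmf p) (B \<inter> set_pmf p)"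
    using fin by (simp add: measure_measure_pmf_finite)
  also have "\<dots> = (\<Sum>a\<in>set_pmf p. pmf p a * indicator B a)"
    using fin by (simp add: sum.inter_restrict Int_commute indicator_def if_distrib cong: if_cong)
  finally show ?thesis .
qed

lemma prob_bind_finite:
  assumes "finite (set_pmf p)"
  shows "measure_pmf.prob (bind_pmf p f) A = (\<Sum>a\<in>set_pmf p. pmf p a * measure_pmf.prob (f a) A)"
proof -
  have "ennreal (measure_pmf.prob (bind_pmf p f) A) = emeasure (measure_pmf (bind_pmf p f)) A"
    by (simp add: measure_pmf.emeasure_eq_measure)
  also have "\<dots> = (\<integral>\<^sup>+ x. emeasure (measure_pmf (f x)) A \<partial>measure_pmf p)"
    by (rule emeasure_bind_pmf)
  also have "\<dots> = (\<Sum>x\<in>set_pmf p. emeasure (measure_pmf (f x)) A * ennreal (pmf p x))"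
    using assms by (simp add: nn_integral_measure_pmf_finite)
  also have "\<dots> = (\<Sum>x\<in>set_pmf p. ennreal (pmf p x * measure_pmf.prob (f x) A))"
    by (simp add: measure_pmf.emeasure_eq_measure ennreal_mult' mult.commute)
  also have "\<dots> = ennreal (\<Sum>a\<in>set_pmf p. pmf p a * measure_pmf.prob (f a) A)"
    by (rule sum_ennreal) simp
  finally show ?thesis by (simp add: sum_nonneg)
qed

definition Pt :: "(real \<Rightarrow> real) pmf \<Rightarrow> nat \<Rightarrow> real \<Rightarrow> real set \<Rightarrow> real" where
  "Pt \<mu> n x B = measure_pmf.prob (Wp \<mu> n) {h. h x \<in> B}"

lemma Pt_sum: "finite (set_pmf \<mu>) \<Longrightarrow>
  Pt \<mu> n x B = (\<Sum>h\<in>set_pmf (Wp \<mu> n). pmf (Wp \<mu> n) h * indicator B (h x))"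
  unfolding Pt_def by (subst prob_sum) (auto simp: finite_Wp indicator_def)

lemma Pt_markov: "finite (set_pmf \<mu>) \<Longrightarrow>
  Pt \<mu> (n + j) x B = (\<Sum>h\<in>set_pmf (Wp \<mu> n). pmf (Wp \<mu> n) h * Pt \<mu> j (h x) B)"
  unfolding Pt_def Wp_add
  by (subst prob_bind_finite) (auto simp: finite_Wp measure_map_pmf vimage_def)

lemma Pt_Suc1: "finite (set_pmf \<mu>) \<Longrightarrow>
  Pt \<mu> (Suc n) x B = (\<Sum>f\<in>set_pmf \<mu>. pmf \<mu> f * Pt \<mu> n (f x) B)"
  using Pt_markov[of \<mu> 1 n x B] by (simp add: Wp_1 del: Wp.simps)

lemma Pt_Suc2: "finite (set_pmf \<mu>) \<Longrightarrow>
  Pt \<mu> (Suc n) x B = (\<Sum>h\<in>set_pmf (Wp \<mu> n). pmf (Wp \<mu> n) h *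
       (\<Sum>f\<in>set_pmf \<mu>. pmf \<mu> f * indicator B (f (h x))))"
proof -
  assume fin: "finite (set_pmf \<mu>)"
  have "Pt \<mu> 1 z B = (\<Sum>f\<in>set_pmf \<mu>. pmf \<mu> f * indicator B (f z))" for z
    using Pt_sum[OF fin, of 1 z B] by (simp add: Wp_1 del: Wp.simps)
  then show ?thesis using Pt_markov[OF fin, of n 1 x B] by simp
qed

lemma Pt_nonneg: "0 \<le> Pt \<mu> n x B" by (simp add: Pt_def)
lemma Pt_le1: "Pt \<mu> n x B \<le> 1" by (simp add: Pt_def)
lemma Pt_mono: "B \<subseteq> B' \<Longrightarrow> Pt \<mu> n x B \<le> Pt \<mu> n x B'"
  unfolding Pt_def by (rule measure_pmf.finite_measure_mono) auto
lemma Pt_0: "Pt \<mu> 0 x B = indicator B x"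
  by (simp add: Pt_def indicator_def)



abbreviation Om :: "(real \<Rightarrow> real) pmf \<Rightarrow> (real \<Rightarrow> real) stream measure" where
  "Om \<mu> \<equiv> stream_space (measure_pmf \<mu>)"

lemma space_Om[simp]: "space (Om \<mu>) = UNIV"
  by (simp add: space_stream_space)

lemma prob_space_Om: "prob_space (Om \<mu>)"
  by (rule prob_space.prob_space_stream_space) (rule prob_space_measure_pmf)

definition Ev :: "(real \<Rightarrow> real) pmf \<Rightarrow> nat \<Rightarrow> real \<Rightarrow> real set \<Rightarrow> (real \<Rightarrow> real) stream set" where
  "Ev \<mu> n x A = {\<omega> \<in> streams (set_pmf \<mu>). rcomp n \<omega> x \<in> A}"

lemma Ev_0: "Ev \<mu> 0 x A = (if x \<in> A then streams (set_pmf \<mu>) else {})"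
  by (auto simp: Ev_def)

lemma streams_shd_stl: "\<omega> \<in> streams S \<longleftrightarrow> shd \<omega> \<in> S \<and> stl \<omega> \<in> streams S"
  by (metis stream.collapse streams_Stream)

lemma Ev_Suc: "Ev \<mu> (Suc n) x A =
   (\<Union>f\<in>set_pmf \<mu>. (shd -` {f} \<inter> space (Om \<mu>)) \<inter> (stl -` Ev \<mu> n (f x) A \<inter> space (Om \<mu>)))"
proof (rule set_eqI)
  fix \<omega> :: "(real \<Rightarrow> real) stream"
  have r: "rcomp (Suc n) \<omega> x = rcomp n (stl \<omega>) (shd \<omega> x)" by (simp only: rcomp_Suc' o_def)
  have s: "\<omega> \<in> streams (set_pmf \<mu>) \<longleftrightarrow> shd \<omega> \<in> set_pmf \<mu> \<and> stl \<omega> \<in> streams (set_pmf \<mu>)"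
    by (rule streams_shd_stl)
  show "\<omega> \<in> Ev \<mu> (Suc n) x A \<longleftrightarrow> \<omega> \<in> (\<Union>f\<in>set_pmf \<mu>. (shd -` {f} \<inter> space (Om \<mu>)) \<inter> (stl -` Ev \<mu> n (f x) A \<inter> space (Om \<mu>)))"
    unfolding Ev_def using r s by auto
qed

lemma Ev_sets: "finite (set_pmf \<mu>) \<Longrightarrow> Ev \<mu> n x A \<in> sets (Om \<mu>)"
proof (induction n arbitrary: x)
  case 0
  have "streams (set_pmf \<mu>) \<in> sets (Om \<mu>)"
    by (rule streams_sets) simp
  then show ?case by (simp add: Ev_0)
next
  case (Suc n)
  have sh: "shd -` {f} \<inter> space (Om \<mu>) \<in> sets (Om \<mu>)" for f
    by (rule measurable_sets[OF measurable_shd]) simp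
  have st: "stl -` Ev \<mu> n y A \<inter> space (Om \<mu>) \<in> sets (Om \<mu>)" for y
    by (rule measurable_sets[OF measurable_stl]) (rule Suc.IH[OF Suc.prems])
  show ?case unfolding Ev_Suc
    using Suc.prems sh st by (intro sets.finite_UN) auto
qed

lemma AE_streams: "AE \<omega> in Om \<mu>. \<omega> \<in> streams (set_pmf \<mu>)"
proof -
  have "AE \<omega> in Om \<mu>. stream_all (\<lambda>f. f \<in> set_pmf \<mu>) \<omega>"
    by (rule prob_space.AE_stream_all[OF prob_space_measure_pmf])
       (auto simp: measurable_pmf_measure1 AE_measure_pmf)
  then show ?thesis by (simp add: stream_all_iff streams_iff_sset subset_eq)
qed

lemma emeasure_Ev: "finite (set_pmf \<mu>) \<Longrightarrow> emeasure (Om \<mu>) (Ev \<mu> n x A) = ennreal (Pt \<mu> n x A)"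
proof (induction n arbitrary: x)
  case 0
  have "emeasure (Om \<mu>) (streams (set_pmf \<mu>)) = 1"
    by (rule prob_space.emeasure_eq_1_AE[OF prob_space_Om])
       (auto intro: streams_sets AE_streams)
  then show ?case by (simp add: Ev_0 Pt_0)
next
  case (Suc n)
  have eq: "{\<omega> \<in> space (Om \<mu>). t ## \<omega> \<in> Ev \<mu> (Suc n) x A} =
        (if t \<in> set_pmf \<mu> then Ev \<mu> n (t x) A else {})" for t
    by (auto simp: Ev_def rcomp_Suc' streams_Stream simp del: rcomp.simps)
  have "emeasure (Om \<mu>) (Ev \<mu> (Suc n) x A) =
      (\<integral>\<^sup>+ t. emeasure (Om \<mu>) {\<omega> \<in> space (Om \<mu>). t ## \<omega> \<in> Ev \<mu> (Suc n) x A} \<partial>measure_pmf \<mu>)"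
    by (rule prob_space.emeasure_stream_space[OF prob_space_measure_pmf Ev_sets[OF Suc.prems]])
  also have "\<dots> = (\<integral>\<^sup>+ t. ennreal (Pt \<mu> n (t x) A) \<partial>measure_pmf \<mu>)"
    unfolding eq
    by (intro nn_integral_cong_AE) (auto simp: AE_measure_pmf_iff Suc.IH[OF Suc.prems])
  also have "\<dots> = (\<Sum>t\<in>set_pmf \<mu>. ennreal (Pt \<mu> n (t x) A) * ennreal (pmf \<mu> t))"
    using Suc.prems by (simp add: nn_integral_measure_pmf_finite)
  also have "\<dots> = (\<Sum>t\<in>set_pmf \<mu>. ennreal (pmf \<mu> t * Pt \<mu> n (t x) A))"
    by (simp add: ennreal_mult' Pt_nonneg mult.commute)
  also have "\<dots> = ennreal (\<Sum>t\<in>set_pmf \<mu>. pmf \<mu> t * Pt \<mu> n (t x) A)"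
    by (rule sum_ennreal) (simp add: Pt_nonneg)
  also have "\<dots> = ennreal (Pt \<mu> (Suc n) x A)"
    using Pt_Suc1[OF Suc.prems] by simp
  finally show ?case .
qed

lemma measure_Ev: "finite (set_pmf \<mu>) \<Longrightarrow> measure (Om \<mu>) (Ev \<mu> n x A) = Pt \<mu> n x A"
  by (simp add: measure_def emeasure_Ev Pt_nonneg)

lemma hit_exists:
  assumes fin: "finite (set_pmf \<mu>)"
    and rec: "AE \<omega> in Om \<mu>. (\<exists>\<^sub>\<infinity> n. rcomp n \<omega> x \<in> J)"
  shows "\<exists>n. \<exists>h\<in>set_pmf (Wp \<mu> n). h x \<in> J"
proof (rule ccontr)
  assume no: "\<not> ?thesis"
  have "AE \<omega> in Om \<mu>. False"
    using rec AE_streams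
  proof eventually_elim
    case (elim \<omega>)
    then have "\<forall>k. \<omega> !! k \<in> set_pmf \<mu>" by (simp add: streams_iff_snth)
    then have "\<forall>n. rcomp n \<omega> x \<notin> J" using no rcomp_in_Wp by blast
    then show False using elim by simp
  qed
  then show False by (simp add: prob_space.AE_False[OF prob_space_Om])
qed

lemma not_summable:
  assumes fin: "finite (set_pmf \<mu>)"
    and rec: "AE \<omega> in Om \<mu>. (\<exists>\<^sub>\<infinity> n. rcomp n \<omega> x \<in> J)"
  shows "\<not> summable (\<lambda>n. Pt \<mu> n x J)"
proof
  assume sm: "summable (\<lambda>n. Pt \<mu> n x J)"
  have "AE \<omega> in Om \<mu>. eventually (\<lambda>n. \<omega> \<in> space (Om \<mu>) - Ev \<mu> n x J) sequentially"
    by (rule borel_cantelli_AE1)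
       (auto simp: Ev_sets[OF fin] emeasure_Ev[OF fin] measure_Ev[OF fin] sm)
  then have "AE \<omega> in Om \<mu>. False"
    using rec AE_streams
  proof eventually_elim
    case (elim \<omega>)
    then obtain N where N: "\<forall>n\<ge>N. \<omega> \<notin> Ev \<mu> n x J"
      by (auto simp: eventually_sequentially)
    from elim obtain n where "n \<ge> N" "rcomp n \<omega> x \<in> J"
      by (auto simp: INFM_nat_le)
    then show False using N elim by (auto simp: Ev_def)
  qed
  then show False by (simp add: prob_space.AE_False[OF prob_space_Om])
qed



lemma uniform_hit:
  assumes fin: "finite (set_pmf \<mu>)"
    and cont: "\<forall>f\<in>set_pmf \<mu>. continuous_on UNIV f"
    and hit: "\<forall>y. \<exists>n. \<exists>h\<in>set_pmf (Wp \<mu> n). h y \<in> Ob"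
    and Ob: "open Ob" and K: "compact K"
  shows "\<exists>m \<delta>. \<delta> > 0 \<and> (\<forall>y\<in>K. \<exists>j\<le>m. \<delta> \<le> Pt \<mu> j y Ob)"
proof -
  let ?C = "{(n, h). h \<in> set_pmf (Wp \<mu> n)}"
  let ?V = "\<lambda>(n, h). (h::real\<Rightarrow>real) -` Ob"
  have opn: "open (?V T)" if "T \<in> ?C" for T
    using that cont_Wp[OF cont] Ob by (auto intro!: open_vimage)
  have cov: "K \<subseteq> \<Union> (?V ` ?C)"
  proof
    fix y assume "y \<in> K"
    from hit obtain n h where "h \<in> set_pmf (Wp \<mu> n)" "h y \<in> Ob" by blast
    then show "y \<in> \<Union> (?V ` ?C)" by blast
  qed
  obtain C' where C': "C' \<subseteq> ?C" "finite C'" "K \<subseteq> \<Union> (?V ` C')"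
    using compactE_image[OF K opn cov] by blast
  define m where "m = Max (fst ` C' \<union> {0})"
  define \<delta> where "\<delta> = Min ((\<lambda>(n, h). pmf (Wp \<mu> n) h) ` C' \<union> {1})"
  have "\<delta> > 0"
    unfolding \<delta>_def using C' by (subst Min_gr_iff) (auto simp: set_pmf_iff pmf_nonneg order_le_neq_trans)
  moreover have "\<forall>y\<in>K. \<exists>j\<le>m. \<delta> \<le> Pt \<mu> j y Ob"
  proof
    fix y assume "y \<in> K"
    then obtain n h where nh: "(n, h) \<in> C'" "h y \<in> Ob" using C' by blast
    have "n \<le> m" unfolding m_def using nh C' by (intro Max_ge) force+
    have "\<delta> \<le> pmf (Wp \<mu> n) h" unfolding \<delta>_def using nh C' by (intro Min_le) force+
    also have "\<dots> = measure_pmf.prob (Wp \<mu> n) {h}" by (simp add: measure_pmf_single)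
    also have "\<dots> \<le> Pt \<mu> n y Ob" unfolding Pt_def
      using nh by (intro measure_pmf.finite_measure_mono) auto
    finally show "\<exists>j\<le>m. \<delta> \<le> Pt \<mu> j y Ob" using \<open>n \<le> m\<close> by blast
  qed
  ultimately show ?thesis by blast
qed

lemma count_bound1:
  assumes fin: "finite (set_pmf \<mu>)"
    and hitK: "\<forall>y\<in>K. \<exists>j\<le>m. \<delta> \<le> Pt \<mu> j y Ob" and d: "\<delta> > 0"
  shows "\<delta> * Pt \<mu> n x K \<le> (\<Sum>j\<le>m. Pt \<mu> (n + j) x Ob)"
proof -
  let ?W = "Wp \<mu> n"
  have "\<delta> * Pt \<mu> n x K = (\<Sum>h\<in>set_pmf ?W. pmf ?W h * (\<delta> * indicator K (h x)))"
    by (simp add: Pt_sum[OF fin] sum_distrib_left algebra_simps)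
  also have "\<dots> \<le> (\<Sum>h\<in>set_pmf ?W. pmf ?W h * (\<Sum>j\<le>m. Pt \<mu> j (h x) Ob))"
  proof (intro sum_mono mult_left_mono)
    fix h
    show "\<delta> * indicator K (h x) \<le> (\<Sum>j\<le>m. Pt \<mu> j (h x) Ob)"
    proof (cases "h x \<in> K")
      case True
      then obtain j where "j \<le> m" "\<delta> \<le> Pt \<mu> j (h x) Ob" using hitK by blast
      then have "\<delta> \<le> (\<Sum>j\<le>m. Pt \<mu> j (h x) Ob)"
        by (meson atMost_iff finite_atMost Pt_nonneg member_le_sum order_trans)
      then show ?thesis using True by simp
    qed (simp add: sum_nonneg Pt_nonneg)
  qed simp
  also have "\<dots> = (\<Sum>j\<le>m. Pt \<mu> (n + j) x Ob)"
    by (simp add: Pt_markov[OF fin] sum_distrib_left sum.swap[of _ "set_pmf ?W"])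
  finally show ?thesis .
qed

lemma count_bound:
  assumes fin: "finite (set_pmf \<mu>)"
    and hitK: "\<forall>y\<in>K. \<exists>j\<le>m. \<delta> \<le> Pt \<mu> j y Ob" and d: "\<delta> > 0"
  shows "\<delta> * (\<Sum>n<N. Pt \<mu> n x K) \<le> real (Suc m) * ((\<Sum>n<N. Pt \<mu> n x Ob) + real m)"
proof -
  have "\<delta> * (\<Sum>n<N. Pt \<mu> n x K) \<le> (\<Sum>n<N. \<Sum>j\<le>m. Pt \<mu> (n + j) x Ob)"
    unfolding sum_distrib_left by (intro sum_mono count_bound1[OF fin hitK d])
  also have "\<dots> = (\<Sum>j\<le>m. \<Sum>n<N. Pt \<mu> (n + j) x Ob)"
    by (rule sum.swap)
  also have "\<dots> \<le> (\<Sum>j\<le>m. \<Sum>n<N + m. Pt \<mu> n x Ob)"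
  proof (intro sum_mono)
    fix j assume "j \<in> {..m}"
    have "(\<Sum>n<N. Pt \<mu> (n + j) x Ob) = (\<Sum>n\<in>{0+j..<N+j}. Pt \<mu> n x Ob)"
      by (subst sum.shift_bounds_nat_ivl) (simp add: lessThan_atLeast0)
    also have "\<dots> \<le> (\<Sum>n<N + m. Pt \<mu> n x Ob)"
      using \<open>j \<in> {..m}\<close> by (intro sum_mono2) (auto simp: Pt_nonneg)
    finally show "(\<Sum>n<N. Pt \<mu> (n + j) x Ob) \<le> (\<Sum>n<N + m. Pt \<mu> n x Ob)" .
  qed
  also have "\<dots> = real (Suc m) * (\<Sum>n<N + m. Pt \<mu> n x Ob)" by simp
  also have "(\<Sum>n<N + m. Pt \<mu> n x Ob) \<le> (\<Sum>n<N. Pt \<mu> n x Ob) + real m"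
  proof -
    have "(\<Sum>n<N + m. Pt \<mu> n x Ob) = (\<Sum>n<N. Pt \<mu> n x Ob) + (\<Sum>n\<in>{N..<N+m}. Pt \<mu> n x Ob)"
      by (metis le_add1 lessThan_atLeast0 sum.atLeastLessThan_concat zero_le)
    also have "(\<Sum>n\<in>{N..<N+m}. Pt \<mu> n x Ob) \<le> (\<Sum>n\<in>{N..<N+m}. 1)"
      by (intro sum_mono Pt_le1)
    finally show ?thesis by simp
  qed
  then have "real (Suc m) * (\<Sum>n<N + m. Pt \<mu> n x Ob) \<le> real (Suc m) * ((\<Sum>n<N. Pt \<mu> n x Ob) + real m)"
    by (intro mult_left_mono) auto
  finally show ?thesis .
qed

lemma hp_props:
  assumes "homeo_plus f"
  shows "strict_mono f" "continuous_on UNIV f" "continuous_on UNIV (inv f)"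
    "\<And>x. inv f (f x) = x" "\<And>y. f (inv f y) = y" "strict_mono (inv f)"
proof -
  from assms obtain g where sm: "strict_mono f" and h: "homeomorphism UNIV UNIV f g"
    by (auto simp: homeo_plus_def)
  from h have gf: "\<And>x. g (f x) = x" and fg: "\<And>y. f (g y) = y"
    and cf: "continuous_on UNIV f" and cg: "continuous_on UNIV g"
    by (auto simp: homeomorphism_def)
  have ig: "inv f = g" by (rule inv_equality) (auto simp: gf fg)
  show "strict_mono f" "continuous_on UNIV f" "continuous_on UNIV (inv f)"
    "\<And>x. inv f (f x) = x" "\<And>y. f (inv f y) = y"
    using sm cf cg gf fg ig by auto
  show "strict_mono (inv f)"
    unfolding ig strict_mono_def
  proof (intro allI impI)
    fix x y :: real assume "x < y"
    show "g x < g y"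
    proof (rule ccontr)
      assume "\<not> g x < g y"
      then have "f (g y) \<le> f (g x)" using sm by (simp add: strict_mono_less_eq)
      then show False using \<open>x < y\<close> fg by simp
    qed
  qed
qed

lemma hp_le_iff: "homeo_plus f \<Longrightarrow> (f z \<le> y) = (z \<le> inv f y)"
  by (metis hp_props(1,5) strict_mono_less_eq)

definition Cd :: "(real \<Rightarrow> real) pmf \<Rightarrow> nat \<Rightarrow> real \<Rightarrow> real" where
  "Cd \<mu> n y = Pt \<mu> n 0 {..y}"

lemma Cd_Suc:
  assumes fin: "finite (set_pmf \<mu>)" and hom: "\<forall>f\<in>set_pmf \<mu>. homeo_plus f"
  shows "Cd \<mu> (Suc n) y = (\<Sum>f\<in>set_pmf \<mu>. pmf \<mu> f * Cd \<mu> n (inv f y))"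
proof -
  let ?W = "Wp \<mu> n"
  have "Cd \<mu> (Suc n) y = (\<Sum>h\<in>set_pmf ?W. pmf ?W h *
       (\<Sum>f\<in>set_pmf \<mu>. pmf \<mu> f * indicator {..y} (f (h 0))))"
    unfolding Cd_def by (rule Pt_Suc2[OF fin])
  also have "\<dots> = (\<Sum>h\<in>set_pmf ?W. pmf ?W h *
       (\<Sum>f\<in>set_pmf \<mu>. pmf \<mu> f * indicator {..inv f y} (h 0)))"
    using hom by (intro sum.cong refl arg_cong2[where f="(*)"]) (auto simp: indicator_def hp_le_iff)
  also have "\<dots> = (\<Sum>f\<in>set_pmf \<mu>. pmf \<mu> f * Cd \<mu> n (inv f y))"
    by (simp add: Cd_def Pt_sum[OF fin] sum_distrib_left sum.swap[of _ "set_pmf ?W"] algebra_simps)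
  finally show ?thesis .
qed

definition Hs :: "(real \<Rightarrow> real) pmf \<Rightarrow> nat \<Rightarrow> real \<Rightarrow> real" where
  "Hs \<mu> N y = (\<Sum>n<N. Cd \<mu> n y)"

lemma Hs_eq:
  assumes fin: "finite (set_pmf \<mu>)" and hom: "\<forall>f\<in>set_pmf \<mu>. homeo_plus f"
  shows "Hs \<mu> N y + Cd \<mu> N y - Cd \<mu> 0 y = (\<Sum>f\<in>set_pmf \<mu>. pmf \<mu> f * Hs \<mu> N (inv f y))"
proof -
  have "(\<Sum>f\<in>set_pmf \<mu>. pmf \<mu> f * Hs \<mu> N (inv f y)) = (\<Sum>n<N. Cd \<mu> (Suc n) y)"
    by (simp add: Hs_def Cd_Suc[OF fin hom] sum_distrib_left sum.swap[of _ "set_pmf \<mu>"])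
  also have "\<dots> = Hs \<mu> N y + Cd \<mu> N y - Cd \<mu> 0 y"
  proof -
    have a: "(\<Sum>n<Suc N. Cd \<mu> n y) = Cd \<mu> 0 y + (\<Sum>n<N. Cd \<mu> (Suc n) y)"
      by (rule sum.lessThan_Suc_shift)
    have b: "(\<Sum>n<Suc N. Cd \<mu> n y) = (\<Sum>n<N. Cd \<mu> n y) + Cd \<mu> N y"
      by simp
    show ?thesis using a b unfolding Hs_def by linarith
  qed
  finally show ?thesis by simp
qed

lemma Pt_split:
  assumes "u \<le> v"
  shows "Pt \<mu> n x {..v} = Pt \<mu> n x {..u} + Pt \<mu> n x {u<..v}"
proof -
  have "{h. h x \<in> {..v}} = {h. h x \<in> {..u}} \<union> {h. h x \<in> {u<..v}}" using assms by auto
  then show ?thesis unfolding Pt_def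
    by (simp add: measure_pmf.finite_measure_Union disjoint_iff)
qed

lemma Hs_diff:
  assumes "u \<le> v"
  shows "Hs \<mu> N v - Hs \<mu> N u = (\<Sum>n<N. Pt \<mu> n 0 {u<..v})"
  unfolding Hs_def Cd_def using Pt_split[OF assms]
  by (simp add: sum_subtractf[symmetric])

lemma Hs_mono: "u \<le> v \<Longrightarrow> Hs \<mu> N u \<le> Hs \<mu> N v"
proof -
  assume uv: "u \<le> v"
  have "0 \<le> (\<Sum>n<N. Pt \<mu> n 0 {u<..v})" by (intro sum_nonneg) (simp add: Pt_nonneg)
  then show ?thesis using Hs_diff[OF uv, of \<mu> N] by simp
qed



lemma diag_conv:
  fixes F :: "nat \<Rightarrow> real \<Rightarrow> real" and r :: "nat \<Rightarrow> real"
  assumes bdd: "\<And>n. \<exists>B. \<forall>k. \<bar>F k (r n)\<bar> \<le> B"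
  shows "\<exists>d. strict_mono d \<and> (\<forall>n. convergent (\<lambda>k. F (d k) (r n)))"
proof -
  let ?P = "\<lambda>n. \<lambda>s. convergent (\<lambda>k. F (s k) (r n))"
  interpret nat: subseqs ?P
  proof (unfold convergent_def, unfold subseqs_def, auto)
    fix n :: nat and s :: "nat \<Rightarrow> nat" assume s: "strict_mono s"
    obtain M where M: "\<forall>k. \<bar>F k (r n)\<bar> \<le> M" using bdd by blast
    have "bounded {-M..M}"
      using bounded_closed_interval by auto
    moreover have "\<And>k. F (s k) (r n) \<in> {-M..M}"
      using M by (simp add: abs_le_iff minus_le_iff)
    ultimately have "\<exists>l s'. strict_mono s' \<and> ((\<lambda>k. F (s k) (r n)) \<circ> s') \<longlonglongrightarrow> l"
      using compact_Icc compact_imp_seq_compact seq_compactE by metis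
    thus "\<exists>s'. strict_mono (s'::nat\<Rightarrow>nat) \<and> (\<exists>l. (\<lambda>k. F (s (s' k)) (r n)) \<longlonglongrightarrow> l)"
      by (auto simp: comp_def)
  qed
  define d where "d = nat.diagseq"
  have subseq: "strict_mono d"
    unfolding d_def using nat.subseq_diagseq by auto
  have rat_cnv: "?P n d" for n
  proof -
    have Pn_seqseq: "?P n (nat.seqseq (Suc n))"
      by (rule nat.seqseq_holds)
    have 1: "(\<lambda>k. F ((nat.seqseq (Suc n) \<circ> (\<lambda>k. nat.fold_reduce (Suc n) k
      (Suc n + k))) k) (r n)) = (\<lambda>k. F (nat.seqseq (Suc n) k) (r n)) \<circ>
      (\<lambda>k. nat.fold_reduce (Suc n) k (Suc n + k))"
      by auto
    have 2: "?P n (d \<circ> ((+) (Suc n)))"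
      unfolding d_def nat.diagseq_seqseq 1
      by (intro convergent_subseq_convergent Pn_seqseq nat.subseq_diagonal_rest)
    then obtain L where 3: "(\<lambda>na. F (d (na + Suc n)) (r n)) \<longlonglongrightarrow> L"
      by (auto simp: add.commute dest: convergentD)
    then have "(\<lambda>k. F (d k) (r n)) \<longlonglongrightarrow> L"
      by (rule LIMSEQ_offset)
    then show ?thesis
      by (auto simp: convergent_def)
  qed
  show ?thesis using subseq rat_cnv by blast
qed

primrec Dset :: "(real \<Rightarrow> real) set \<Rightarrow> nat \<Rightarrow> real set" where
  "Dset S 0 = \<rat>"
| "Dset S (Suc n) = Dset S n \<union> (\<Union>f\<in>S. f ` Dset S n \<union> inv f ` Dset S n)"

definition DD :: "(real \<Rightarrow> real) set \<Rightarrow> real set" where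
  "DD S = (\<Union>n. Dset S n)"

lemma countable_DD: "finite S \<Longrightarrow> countable (DD S)"
proof -
  assume fin: "finite S"
  have "countable (Dset S n)" for n
    by (induction n) (auto simp: countable_rat fin countable_finite intro!: countable_UN countable_image)
  then show ?thesis unfolding DD_def by blast
qed

lemma Rats_DD: "\<rat> \<subseteq> DD S"
  unfolding DD_def by (metis Dset.simps(1) UN_upper UNIV_I)

lemma DD_closed: "f \<in> S \<Longrightarrow> d \<in> DD S \<Longrightarrow> f d \<in> DD S \<and> inv f d \<in> DD S"
proof -
  assume f: "f \<in> S" and "d \<in> DD S"
  then obtain n where "d \<in> Dset S n" unfolding DD_def by auto
  then have "f d \<in> Dset S (Suc n) \<and> inv f d \<in> Dset S (Suc n)" using f by auto
  then show ?thesis unfolding DD_def by blast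
qed

lemma abstract_limit:
  fixes F :: "nat \<Rightarrow> real \<Rightarrow> real" and S :: "(real \<Rightarrow> real) set" and p :: "(real \<Rightarrow> real) \<Rightarrow> real"
  assumes fin: "finite S"
    and cinv: "\<And>f. f \<in> S \<Longrightarrow> continuous_on UNIV (inv f)"
    and sminv: "\<And>f. f \<in> S \<Longrightarrow> strict_mono (inv f)"
    and finv: "\<And>f y. f \<in> S \<Longrightarrow> inv f (f y) = y"
    and mono: "\<And>N x y. x \<le> y \<Longrightarrow> F N x \<le> F N y"
    and bdd: "\<And>y. \<exists>B. \<forall>N. \<bar>F N y\<bar> \<le> B"
    and err: "\<And>y. (\<lambda>N. F N y - (\<Sum>f\<in>S. p f * F N (inv f y))) \<longlonglongrightarrow> 0"
    and nd: "q1 \<in> \<rat>" "q2 \<in> \<rat>" "\<And>N. F N q2 - F N q1 = 1"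
  shows "\<exists>G. (\<forall>x y. x \<le> y \<longrightarrow> G x \<le> G y) \<and> (\<forall>a. continuous (at_right a) G)
      \<and> (\<forall>z. G z = (\<Sum>f\<in>S. p f * G (inv f z))) \<and> G q2 - G (q1 - 1) \<ge> 1"
proof -
  define D where "D = DD S"
  have cD: "countable D" and ne: "D \<noteq> {}" and QD: "\<rat> \<subseteq> D"
    using countable_DD[OF fin] Rats_DD[of S] by (auto simp: D_def)
  define r where "r = from_nat_into D"
  have rD: "range r = D" unfolding r_def using range_from_nat_into[OF ne cD] .
  obtain s where s: "strict_mono s" and cv: "\<And>n. convergent (\<lambda>k. F (s k) (r n))"
    using diag_conv[of F r] bdd by blast
  define \<Phi> where "\<Phi> d = lim (\<lambda>k. F (s k) d)" for d
  have lim\<Phi>: "(\<lambda>k. F (s k) d) \<longlonglongrightarrow> \<Phi> d" if "d \<in> D" for d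
  proof -
    from that rD obtain n where "d = r n" by auto
    then show ?thesis using cv[of n] unfolding \<Phi>_def by (simp add: convergent_LIMSEQ_iff)
  qed
  have \<Phi>mono: "\<Phi> d \<le> \<Phi> d'" if "d \<in> D" "d' \<in> D" "d \<le> d'" for d d'
    using that by (intro LIMSEQ_le[OF lim\<Phi> lim\<Phi>]) (auto intro: mono)
  have invD: "inv f d \<in> D" "f d \<in> D" if "f \<in> S" "d \<in> D" for f d
    using DD_closed[OF that(1)] that(2) unfolding D_def by auto
  have \<Phi>eq: "\<Phi> d = (\<Sum>f\<in>S. p f * \<Phi> (inv f d))" if "d \<in> D" for d
  proof -
    have "(\<lambda>k. F (s k) d - (\<Sum>f\<in>S. p f * F (s k) (inv f d))) \<longlonglongrightarrow> 0"
      using LIMSEQ_subseq_LIMSEQ[OF err s] by (simp add: comp_def)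
    moreover have "(\<lambda>k. F (s k) d - (\<Sum>f\<in>S. p f * F (s k) (inv f d))) \<longlonglongrightarrow>
        \<Phi> d - (\<Sum>f\<in>S. p f * \<Phi> (inv f d))"
      using that invD by (intro tendsto_intros lim\<Phi>) auto
    ultimately show ?thesis using LIMSEQ_unique by fastforce
  qed
  define G where "G y = Inf (\<Phi> ` (D \<inter> {y<..}))" for y
  have neD: "D \<inter> {y<..} \<noteq> {}" for y
    using QD Rats_no_top_le[of "y + 1"] by force
  have bddD: "bdd_below (\<Phi> ` (D \<inter> {y<..}))" for y
  proof -
    obtain q where q: "q \<in> \<rat>" "q < y" using Rats_no_bot_less by blast
    then show ?thesis using QD
      by (intro bdd_belowI[where m="\<Phi> q"]) (auto intro!: \<Phi>mono)
  qed
  have G_le: "G y \<le> \<Phi> d" if "d \<in> D" "y < d" for y d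
    unfolding G_def using that bddD by (intro cInf_lower) auto
  have G_ge: "\<Phi> d \<le> G y" if "d \<in> D" "d \<le> y" for y d
    unfolding G_def using that neD by (intro cInf_greatest) (auto intro!: \<Phi>mono)
  have G_lt: "\<exists>d\<in>D. y < d \<and> \<Phi> d < G y + e" if "e > 0" for y e
  proof -
    have "G y < G y + e" using that by simp
    then have "\<exists>x\<in>\<Phi> ` (D \<inter> {y<..}). x < G y + e"
      using cInf_less_iff[of "\<Phi> ` (D \<inter> {y<..})" "G y + e"] neD[of y] bddD[of y]
      unfolding G_def by auto
    then show ?thesis by auto
  qed
  have Gmono: "G x \<le> G y" if "x \<le> y" for x y
    unfolding G_def[of y] using neD that
    by (intro cInf_greatest) (auto intro!: G_le)
  have Glim: "(\<lambda>k. \<Phi> (e k)) \<longlonglongrightarrow> G z" if e: "\<And>k. e k \<in> D" "\<And>k. z < e k" "e \<longlonglongrightarrow> z" for e z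
  proof (rule LIMSEQ_I)
    fix \<epsilon> :: real assume "\<epsilon> > 0"
    then obtain d where d: "d \<in> D" "z < d" "\<Phi> d < G z + \<epsilon>" using G_lt by blast
    then have "eventually (\<lambda>k. e k < d) sequentially"
      using order_tendstoD(2)[OF e(3)] by blast
    then obtain K where K: "\<And>k. k \<ge> K \<Longrightarrow> e k < d" by (auto simp: eventually_sequentially)
    show "\<exists>K. \<forall>k\<ge>K. norm (\<Phi> (e k) - G z) < \<epsilon>"
    proof (intro exI allI impI)
      fix k assume "k \<ge> K"
      have "G z \<le> \<Phi> (e k)" using G_le e by auto
      moreover have "\<Phi> (e k) \<le> \<Phi> d" using K[OF \<open>k \<ge> K\<close>] e d by (intro \<Phi>mono) auto
      ultimately show "norm (\<Phi> (e k) - G z) < \<epsilon>" using d by simp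
    qed
  qed
  have Grc: "continuous (at_right a) G" for a
  proof (subst continuous_at_right_real_increasing)
    show "\<And>x y. x \<le> y \<Longrightarrow> G x \<le> G y" by (rule Gmono)
    show "\<forall>\<epsilon>>0. \<exists>\<delta>>0. G (a + \<delta>) - G a < \<epsilon>"
    proof (intro allI impI)
      fix \<epsilon> :: real assume "\<epsilon> > 0"
      then obtain d where d: "d \<in> D" "a < d" "\<Phi> d < G a + \<epsilon>" using G_lt by blast
      have "G (a + (d - a) / 2) \<le> \<Phi> d" using d by (intro G_le) (auto simp: field_simps)
      then show "\<exists>\<delta>>0. G (a + \<delta>) - G a < \<epsilon>" using d by (intro exI[of _ "(d - a) / 2"]) auto
    qed
  qed
  have Geq: "G z = (\<Sum>f\<in>S. p f * G (inv f z))" for z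
  proof -
    have "\<forall>k. \<exists>q\<in>\<rat>. z < q \<and> q < z + 1 / (Suc k)"
      by (auto intro!: Rats_dense_in_real)
    then obtain e where e: "\<And>k. e k \<in> \<rat>" "\<And>k. z < e k" "\<And>k. e k < z + 1 / Suc k"
      by metis
    have eD: "e k \<in> D" for k using e QD by auto
    have elim: "e \<longlonglongrightarrow> z"
    proof (rule tendsto_sandwich[of "\<lambda>k. z" _ _ "\<lambda>k. z + 1 / Suc k"])
      show "\<forall>\<^sub>F n in sequentially. z \<le> e n" using e(2) by (intro always_eventually allI less_imp_le)
      show "\<forall>\<^sub>F n in sequentially. e n \<le> z + 1 / real (Suc n)" using e(3) by (intro always_eventually allI less_imp_le)
      show "(\<lambda>n. z + 1 / real (Suc n)) \<longlonglongrightarrow> z"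
        using tendsto_add[OF tendsto_const LIMSEQ_inverse_real_of_nat, of z] by (simp add: inverse_eq_divide)
    qed simp
    have l1: "(\<lambda>k. \<Phi> (e k)) \<longlonglongrightarrow> G z" using Glim[OF eD e(2) elim] .
    have l2: "(\<lambda>k. \<Phi> (inv f (e k))) \<longlonglongrightarrow> G (inv f z)" if "f \<in> S" for f
    proof (rule Glim)
      show "inv f (e k) \<in> D" for k using invD that eD by auto
      show "inv f z < inv f (e k)" for k using sminv[OF that] e(2) by (simp add: strict_mono_less)
      have "isCont (inv f) z" using cinv[OF that] by (simp add: continuous_on_eq_continuous_at)
      then show "(\<lambda>k. inv f (e k)) \<longlonglongrightarrow> inv f z" using elim by (rule isCont_tendsto_compose)
    qed
    have "(\<lambda>k. \<Sum>f\<in>S. p f * \<Phi> (inv f (e k))) \<longlonglongrightarrow> (\<Sum>f\<in>S. p f * G (inv f z))"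
      using l2 by (intro tendsto_intros) auto
    moreover have "(\<lambda>k. \<Sum>f\<in>S. p f * \<Phi> (inv f (e k))) = (\<lambda>k. \<Phi> (e k))"
      using \<Phi>eq eD by auto
    ultimately show ?thesis using l1 LIMSEQ_unique by metis
  qed
  have "\<Phi> q2 - \<Phi> q1 = 1"
  proof -
    have "(\<lambda>k. F (s k) q2 - F (s k) q1) \<longlonglongrightarrow> \<Phi> q2 - \<Phi> q1"
      using nd QD by (intro tendsto_intros lim\<Phi>) auto
    then show ?thesis using nd(3) by (simp add: LIMSEQ_const_iff)
  qed
  moreover have "\<Phi> q2 \<le> G q2" using nd QD by (intro G_ge) auto
  moreover have "G (q1 - 1) \<le> \<Phi> q1" using nd QD by (intro G_le) auto
  ultimately have "G q2 - G (q1 - 1) \<ge> 1" by simp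
  then show ?thesis using Gmono Grc Geq by blast
qed



lemma preimage_Ioc:
  assumes "homeo_plus f"
  shows "f -` {a<..b} = {inv f a<..inv f b}"
proof -
  have sm: "strict_mono f" and fi: "\<And>y. f (inv f y) = y" using hp_props[OF assms] by auto
  have "a < f x \<longleftrightarrow> inv f a < x" for x by (metis fi sm strict_mono_less)
  moreover have "f x \<le> b \<longleftrightarrow> x \<le> inv f b" for x by (rule hp_le_iff[OF assms])
  ultimately show ?thesis by auto
qed

lemma measure_from_G:
  fixes S :: "(real \<Rightarrow> real) set" and p :: "(real \<Rightarrow> real) \<Rightarrow> real" and G :: "real \<Rightarrow> real"
  assumes fin: "finite S" and hom: "\<forall>f\<in>S. homeo_plus f"
    and mono: "\<forall>x y. x \<le> y \<longrightarrow> G x \<le> G y" and rc: "\<forall>a. continuous (at_right a) G"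
    and eq: "\<forall>z. G z = (\<Sum>f\<in>S. p f * G (inv f z))" and pnn: "\<forall>f\<in>S. 0 \<le> p f"
    and nd: "u \<le> v" "G v - G u \<ge> 1"
  shows "sets (interval_measure G) = sets borel
     \<and> (\<forall>K. compact K \<longrightarrow> emeasure (interval_measure G) K < \<infinity>)
     \<and> emeasure (interval_measure G) UNIV \<noteq> 0
     \<and> (\<forall>A\<in>sets borel. emeasure (interval_measure G) A =
          (\<Sum>f\<in>S. ennreal (p f) * emeasure (interval_measure G) (f -` A)))"
proof -
  define \<nu> where "\<nu> = interval_measure G"
  have sets\<nu>[simp]: "sets \<nu> = sets borel" unfolding \<nu>_def by simp
  have Ioc: "emeasure \<nu> {a<..b} = ennreal (G b - G a)" if "a \<le> b" for a b
    unfolding \<nu>_def using mono rc that by (intro emeasure_interval_measure_Ioc) auto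
  have cpt: "emeasure \<nu> K < \<infinity>" if "compact K" for K
  proof -
    from compact_imp_bounded[OF that] obtain B where B: "\<forall>x\<in>K. \<bar>x\<bar> \<le> B"
      by (auto simp: bounded_real)
    have "K \<subseteq> {-\<bar>B\<bar>-1<..\<bar>B\<bar>}" using B by force
    then have "emeasure \<nu> K \<le> emeasure \<nu> {-\<bar>B\<bar>-1<..\<bar>B\<bar>}" by (intro emeasure_mono) auto
    also have "\<dots> = ennreal (G \<bar>B\<bar> - G (-\<bar>B\<bar>-1))" 
      by (intro Ioc) linarith
    finally show ?thesis by (simp add: le_less_trans)
  qed
  have nz: "emeasure \<nu> UNIV \<noteq> 0"
  proof
    assume "emeasure \<nu> UNIV = 0"
    moreover have "emeasure \<nu> {u<..v} \<le> emeasure \<nu> UNIV" by (intro emeasure_mono) auto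
    ultimately have "emeasure \<nu> {u<..v} = 0" by simp
    then show False using Ioc[OF nd(1)] nd(2) by simp
  qed
  have meas: "f -` B \<in> sets borel" if "f \<in> S" "B \<in> sets borel" for f B
  proof -
    have "continuous_on UNIV f" using hp_props(2) hom that(1) by auto
    then have "f \<in> borel_measurable borel" by (rule borel_measurable_continuous_onI)
    then have "f -` B \<inter> space borel \<in> sets borel" using that(2) by (rule measurable_sets)
    then show ?thesis by simp
  qed
  define \<mu>' where "\<mu>' A = (\<Sum>f\<in>S. ennreal (p f) * emeasure \<nu> (f -` A))" for A
  define \<nu>' where "\<nu>' = measure_of UNIV (sets borel) \<mu>'"
  have ca: "countably_additive (sets borel) \<mu>'"
    unfolding countably_additive_def
  proof (intro allI impI)
    fix A :: "nat \<Rightarrow> real set"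
    assume A: "range A \<subseteq> sets borel" "disjoint_family A" "\<Union> (range A) \<in> sets borel"
    have "(\<Sum>i. \<mu>' (A i)) = (\<Sum>f\<in>S. \<Sum>i. ennreal (p f) * emeasure \<nu> (f -` A i))"
      unfolding \<mu>'_def by (rule suminf_sum) (rule summableI)
    also have "\<dots> = (\<Sum>f\<in>S. ennreal (p f) * emeasure \<nu> (f -` \<Union> (range A)))"
    proof (intro sum.cong refl)
      fix f assume f: "f \<in> S"
      have "(\<Sum>i. emeasure \<nu> (f -` A i)) = emeasure \<nu> (\<Union>i. f -` A i)"
      proof (rule suminf_emeasure)
        show "range (\<lambda>i. f -` A i) \<subseteq> sets \<nu>" using A(1) meas f by auto
        show "disjoint_family (\<lambda>i. f -` A i)" using A(2) by (auto simp: disjoint_family_on_def)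
      qed
      then show "(\<Sum>i. ennreal (p f) * emeasure \<nu> (f -` A i)) = ennreal (p f) * emeasure \<nu> (f -` \<Union> (range A))"
        by (simp add: ennreal_suminf_cmult vimage_UN)
    qed
    finally show "(\<Sum>i. \<mu>' (A i)) = \<mu>' (\<Union> (range A))" unfolding \<mu>'_def .
  qed
  have pos: "positive (sets borel) \<mu>'" unfolding positive_def \<mu>'_def by simp
  have em': "emeasure \<nu>' A = \<mu>' A" if "A \<in> sets borel" for A
    unfolding \<nu>'_def by (rule emeasure_measure_of_sigma[OF _ pos ca that]) (metis sets.sigma_algebra_axioms space_borel)
  define E where "E = range (\<lambda>(a, b). {a<..b::real})"
  have sigE: "sets borel = sigma_sets UNIV E"
    unfolding E_def by (subst borel_sigma_sets_Ioc) (simp add: sets_measure_of)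
  have "\<nu> = \<nu>'"
  proof (rule measure_eqI_generator_eq[where E=E and \<Omega>=UNIV and A="\<lambda>i. {-real i<..real i}"])
    show "Int_stable E"
      unfolding Int_stable_def E_def
    proof (intro ballI)
      fix X Y assume "X \<in> range (\<lambda>(a, b). {a<..b::real})" "Y \<in> range (\<lambda>(a, b). {a<..b::real})"
      then obtain a b c d where XY: "X = {a<..b}" "Y = {c<..d}" by auto
      have "X \<inter> Y = (\<lambda>(a, b). {a<..b::real}) (max a c, min b d)" unfolding XY by auto
      then show "X \<inter> Y \<in> range (\<lambda>(a, b). {a<..b::real})" by (metis rangeI)
    qed
    show "E \<subseteq> Pow UNIV" by simp
    show "sets \<nu> = sigma_sets UNIV E" using sigE by simp
    have "sets \<nu>' = sets borel" unfolding \<nu>'_def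
      by (rule sigma_algebra.sets_measure_of_eq) (metis sets.sigma_algebra_axioms space_borel)
    then show "sets \<nu>' = sigma_sets UNIV E" using sigE by simp
    show "range (\<lambda>i. {- real i<..real i}) \<subseteq> E" unfolding E_def by auto
    show "(\<Union>i. {- real i<..real i}) = UNIV"
    proof -
      have "x \<in> (\<Union>i. {- real i<..real i})" for x :: real
      proof -
        obtain i :: nat where "\<bar>x\<bar> < real i" using reals_Archimedean2 by blast
        then have "x \<in> {- real i<..real i}" by (simp add: abs_less_iff)
        then show ?thesis by (rule UN_I[rotated]) simp
      qed
      then show ?thesis by blast
    qed
    show "emeasure \<nu> {- real i<..real i} \<noteq> \<infinity>" for i
    proof -
      have "- real i \<le> real i" by simp
      from Ioc[OF this] show ?thesis by simp
    qed
    show "emeasure \<nu> X = emeasure \<nu>' X" if "X \<in> E" for X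
    proof -
      from that obtain a b where X: "X = {a<..b}" unfolding E_def by auto
      have Xs: "X \<in> sets borel" unfolding X by simp
      show ?thesis
      proof (cases "a \<le> b")
        case False
        then have "X = {}" unfolding X by auto
        then show ?thesis using em'[OF Xs] by (simp add: \<mu>'_def)
      next
        case True
        have "\<mu>' X = (\<Sum>f\<in>S. ennreal (p f) * ennreal (G (inv f b) - G (inv f a)))"
          unfolding \<mu>'_def X
        proof (intro sum.cong refl)
          fix f assume f: "f \<in> S"
          have "inv f a \<le> inv f b" using hp_props(6)[of f] hom f True
            by (simp add: strict_mono_less_eq)
          then show "ennreal (p f) * emeasure \<nu> (f -` {a<..b}) = ennreal (p f) * ennreal (G (inv f b) - G (inv f a))"
            using preimage_Ioc[of f a b] hom f Ioc by auto
        qed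
        also have "\<dots> = (\<Sum>f\<in>S. ennreal (p f * (G (inv f b) - G (inv f a))))"
        proof (intro sum.cong refl)
          fix f assume "f \<in> S"
          then have "0 \<le> p f" using pnn by auto
          then show "ennreal (p f) * ennreal (G (inv f b) - G (inv f a)) = ennreal (p f * (G (inv f b) - G (inv f a)))"
            by (simp add: ennreal_mult')
        qed
        also have "\<dots> = ennreal (\<Sum>f\<in>S. p f * (G (inv f b) - G (inv f a)))"
        proof (rule sum_ennreal)
          fix f assume f: "f \<in> S"
          have "inv f a \<le> inv f b" using hp_props(6)[of f] hom f True
            by (simp add: strict_mono_less_eq)
          then have "G (inv f a) \<le> G (inv f b)" using mono by blast
          moreover have "0 \<le> p f" using pnn f by blast
          ultimately show "0 \<le> p f * (G (inv f b) - G (inv f a))" by simp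
        qed
        also have "(\<Sum>f\<in>S. p f * (G (inv f b) - G (inv f a))) = G b - G a"
        proof -
          have "(\<Sum>f\<in>S. p f * (G (inv f b) - G (inv f a))) = (\<Sum>f\<in>S. p f * G (inv f b)) - (\<Sum>f\<in>S. p f * G (inv f a))"
            by (simp add: right_diff_distrib sum_subtractf)
          also have "\<dots> = G b - G a"
            by (simp only: eq[rule_format, of b, symmetric] eq[rule_format, of a, symmetric])
          finally show ?thesis .
        qed
        finally show ?thesis using em'[OF Xs] Ioc[OF True] X by simp
      qed
    qed
  qed
  then have "\<forall>A\<in>sets borel. emeasure \<nu> A = \<mu>' A" using em' by simp
  then show ?thesis using cpt nz unfolding \<nu>_def \<mu>'_def by simp
qed



lemma partial_sums_at_top:
  fixes f :: "nat \<Rightarrow> real"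
  assumes nn: "\<And>n. 0 \<le> f n" and ns: "\<not> summable f"
  shows "filterlim (\<lambda>N. \<Sum>n<N. f n) at_top sequentially"
proof (subst filterlim_at_top, intro allI)
  fix M :: real
  have "\<exists>N. M \<le> (\<Sum>n<N. f n)"
  proof (rule ccontr)
    assume "\<not> ?thesis"
    then have "\<And>N. (\<Sum>n<N. f n) \<le> M" by (meson linorder_le_cases not_le)
    then have "summable f" by (intro summableI_nonneg_bounded[OF nn]) auto
    then show False using ns by simp
  qed
  then obtain N where N: "M \<le> (\<Sum>n<N. f n)" by blast
  have "(\<Sum>n<N. f n) \<le> (\<Sum>n<N'. f n)" if "N \<le> N'" for N'
    using that nn by (intro sum_mono2) auto
  then show "eventually (\<lambda>N. M \<le> (\<Sum>n<N. f n)) sequentially"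
    using N unfolding eventually_sequentially by (meson order_trans)
qed

lemma Cd_bounds: "0 \<le> Cd \<mu> n y" "Cd \<mu> n y \<le> 1"
  unfolding Cd_def by (auto simp: Pt_nonneg Pt_le1)

theorem main_proof:
  fixes \<mu> :: "(real \<Rightarrow> real) pmf"
  assumes fin: "finite (set_pmf \<mu>)"
    and hom: "\<forall>f \<in> set_pmf \<mu>. homeo_plus f"
    and rec: "recurrent \<mu>"
  shows "\<exists>\<nu> :: real measure. sets \<nu> = sets borel
           \<and> (\<forall>K. compact K \<longrightarrow> emeasure \<nu> K < \<infinity>)
           \<and> emeasure \<nu> UNIV \<noteq> 0
           \<and> stationary \<mu> \<nu>"
proof -
  let ?S = "set_pmf \<mu>"
  obtain a b where ab: "a \<le> b" and recab: "\<And>x. AE \<omega> in Om \<mu>. (\<exists>\<^sub>\<infinity> n. rcomp n \<omega> x \<in> {a..b})"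
    using rec unfolding recurrent_def by blast
  obtain q1 where q1: "q1 \<in> \<rat>" "q1 < a" using Rats_no_bot_less by blast
  obtain q2 where q2: "q2 \<in> \<rat>" "b + 1 \<le> q2" using Rats_no_top_le by blast
  define Ob where "Ob = {q1<..<q2}"
  have abO: "{a..b} \<subseteq> Ob" unfolding Ob_def using q1 q2 by auto
  have OI: "Ob \<subseteq> {q1<..q2}" unfolding Ob_def by auto
  have cont: "\<forall>f\<in>?S. continuous_on UNIV f" using hom hp_props(2) by blast
  have hitO: "\<forall>y. \<exists>n. \<exists>h\<in>set_pmf (Wp \<mu> n). h y \<in> Ob"
    using hit_exists[OF fin recab] abO by blast
  define Z where "Z N = (\<Sum>n<N. Pt \<mu> n 0 {q1<..q2})" for N
  have Z_Hs: "Z N = Hs \<mu> N q2 - Hs \<mu> N q1" for N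
    unfolding Z_def using Hs_diff[of q1 q2 \<mu> N] q1 q2 ab by simp
  have Zinf: "filterlim Z at_top sequentially"
  proof -
    have l: "filterlim (\<lambda>N. \<Sum>n<N. Pt \<mu> n 0 {a..b}) at_top sequentially"
      by (rule partial_sums_at_top[OF Pt_nonneg not_summable[OF fin recab]])
    have le: "(\<Sum>n<N. Pt \<mu> n 0 {a..b}) \<le> Z N" for N
      unfolding Z_def using abO OI by (intro sum_mono Pt_mono) auto
    show ?thesis
      by (rule filterlim_at_top_mono[OF l always_eventually]) (simp add: le)
  qed
  obtain N0 where N0: "\<And>N. N \<ge> N0 \<Longrightarrow> 1 \<le> Z N"
    using Zinf[unfolded filterlim_at_top, rule_format, of 1] by (auto simp: eventually_sequentially)
  define F where "F k y = (Hs \<mu> (k + N0) y - Hs \<mu> (k + N0) 0) / Z (k + N0)" for k y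
  have Zpos: "0 < Z (k + N0)" for k using N0[of "k + N0"] by simp
  have Fmono: "F k x \<le> F k y" if "x \<le> y" for k x y
    unfolding F_def using Zpos[of k] Hs_mono[OF that, of \<mu> "k + N0"]
    by (intro divide_right_mono) auto
  have Fbdd: "\<exists>B. \<forall>k. \<bar>F k y\<bar> \<le> B" for y
  proof -
    define K where "K = {min 0 y..max 0 y}"
    have "open Ob" unfolding Ob_def by simp
    then obtain m \<delta> where d: "\<delta> > 0" and hitK: "\<forall>y\<in>K. \<exists>j\<le>m. \<delta> \<le> Pt \<mu> j y Ob"
      using uniform_hit[OF fin cont hitO _ compact_Icc] unfolding K_def by blast
    show ?thesis
    proof (intro exI allI)
      fix k
      let ?N = "k + N0"
      have cb: "\<delta> * (\<Sum>n<?N. Pt \<mu> n 0 K) \<le> real (Suc m) * ((\<Sum>n<?N. Pt \<mu> n 0 Ob) + real m)"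
        by (rule count_bound[OF fin hitK d])
      have "(\<Sum>n<?N. Pt \<mu> n 0 Ob) \<le> Z ?N"
        unfolding Z_def using OI by (intro sum_mono Pt_mono) auto
      then have cb2: "\<delta> * (\<Sum>n<?N. Pt \<mu> n 0 K) \<le> real (Suc m) * (Z ?N + real m)"
        using cb by (smt (verit) mult_left_mono of_nat_0_le_iff)
      have hk: "\<bar>Hs \<mu> ?N y - Hs \<mu> ?N 0\<bar> \<le> (\<Sum>n<?N. Pt \<mu> n 0 K)"
      proof (cases "0 \<le> y")
        case True
        have "Hs \<mu> ?N y - Hs \<mu> ?N 0 = (\<Sum>n<?N. Pt \<mu> n 0 {0<..y})" by (rule Hs_diff[OF True])
        moreover have "(\<Sum>n<?N. Pt \<mu> n 0 {0<..y}) \<le> (\<Sum>n<?N. Pt \<mu> n 0 K)"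
          unfolding K_def using True by (intro sum_mono Pt_mono) auto
        moreover have "0 \<le> (\<Sum>n<?N. Pt \<mu> n 0 {0<..y})" by (intro sum_nonneg Pt_nonneg)
        ultimately show ?thesis by simp
      next
        case False
        then have yl: "y \<le> 0" by simp
        have "Hs \<mu> ?N 0 - Hs \<mu> ?N y = (\<Sum>n<?N. Pt \<mu> n 0 {y<..0})" by (rule Hs_diff[OF yl])
        moreover have "(\<Sum>n<?N. Pt \<mu> n 0 {y<..0}) \<le> (\<Sum>n<?N. Pt \<mu> n 0 K)"
          unfolding K_def using yl by (intro sum_mono Pt_mono) auto
        moreover have "0 \<le> (\<Sum>n<?N. Pt \<mu> n 0 {y<..0})" by (intro sum_nonneg Pt_nonneg)
        ultimately show ?thesis by simp
      qed
      have Z1: "1 \<le> Z ?N" using N0 by simp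
      have "\<bar>F k y\<bar> = \<bar>Hs \<mu> ?N y - Hs \<mu> ?N 0\<bar> / Z ?N"
        unfolding F_def using Zpos[of k] by simp
      also have "\<dots> \<le> (\<Sum>n<?N. Pt \<mu> n 0 K) / Z ?N"
        using hk Zpos[of k] by (intro divide_right_mono) auto
      also have "\<dots> \<le> real (Suc m) * (Z ?N + real m) / (\<delta> * Z ?N)"
        using cb2 d Zpos[of k] by (simp add: field_simps)
      also have "\<dots> = real (Suc m) / \<delta> * (1 + real m / Z ?N)"
        using d Zpos[of k] by (simp add: field_simps)
      also have "\<dots> \<le> real (Suc m) / \<delta> * (1 + real m)"
      proof -
        have "real m / Z ?N \<le> real m" using Z1 by (simp add: divide_le_eq mult_le_cancel_left1 Zpos)
        then show ?thesis using d by (intro mult_left_mono) auto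
      qed
      finally show "\<bar>F k y\<bar> \<le> real (Suc m) / \<delta> * (1 + real m)" .
    qed
  qed
  have sum1: "(\<Sum>f\<in>?S. pmf \<mu> f) = 1" by (rule sum_pmf_eq_1[OF fin]) simp
  have Ferr: "(\<lambda>k. F k y - (\<Sum>f\<in>?S. pmf \<mu> f * F k (inv f y))) \<longlonglongrightarrow> 0" for y
  proof -
    have eqk: "F k y - (\<Sum>f\<in>?S. pmf \<mu> f * F k (inv f y)) =
        - (Cd \<mu> (k + N0) y - Cd \<mu> 0 y) / Z (k + N0)" for k
    proof -
      let ?N = "k + N0"
      have "(\<Sum>f\<in>?S. pmf \<mu> f * F k (inv f y)) =
          ((\<Sum>f\<in>?S. pmf \<mu> f * Hs \<mu> ?N (inv f y)) - (\<Sum>f\<in>?S. pmf \<mu> f) * Hs \<mu> ?N 0) / Z ?N"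
        unfolding F_def by (simp add: sum_divide_distrib[symmetric] right_diff_distrib sum_subtractf sum_distrib_right)
      also have "\<dots> = (Hs \<mu> ?N y + Cd \<mu> ?N y - Cd \<mu> 0 y - Hs \<mu> ?N 0) / Z ?N"
        using Hs_eq[OF fin hom, of ?N y] sum1 by simp
      finally show ?thesis unfolding F_def using Zpos[of k] by (simp add: field_simps)
    qed
    have "(\<lambda>k. 1 / Z (k + N0)) \<longlonglongrightarrow> 0"
    proof -
      have "filterlim (\<lambda>k. Z (k + N0)) at_top sequentially"
        using filterlim_compose[OF Zinf filterlim_add_const_nat_at_top] by (simp add: comp_def)
      then show ?thesis using tendsto_inverse_0_at_top by (simp add: inverse_eq_divide)
    qed
    moreover have bnd: "\<forall>k. norm (F k y - (\<Sum>f\<in>?S. pmf \<mu> f * F k (inv f y))) \<le> 1 / Z (k + N0)"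
    proof
      fix k
      have "\<bar>Cd \<mu> (k + N0) y - Cd \<mu> 0 y\<bar> \<le> 1" using Cd_bounds[of \<mu>] by (smt (verit))
      then show "norm (F k y - (\<Sum>f\<in>?S. pmf \<mu> f * F k (inv f y))) \<le> 1 / Z (k + N0)"
        unfolding eqk using Zpos[of k] by (simp add: abs_minus_commute divide_right_mono)
    qed
    ultimately show ?thesis using Lim_null_comparison[OF always_eventually[OF bnd]] by blast
  qed
  have Fnd: "F k q2 - F k q1 = 1" for k
    unfolding F_def using Zpos[of k] Z_Hs[of "k + N0"] by (simp add: field_simps)
  obtain G where Gmono: "\<forall>x y. x \<le> y \<longrightarrow> G x \<le> G y" and Grc: "\<forall>a. continuous (at_right a) G"
    and Geq: "\<forall>z. G z = (\<Sum>f\<in>?S. pmf \<mu> f * G (inv f z))" and Gnd: "G q2 - G (q1 - 1) \<ge> 1"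
  proof -
    have c1: "\<And>f. f \<in> ?S \<Longrightarrow> continuous_on UNIV (inv f)" using hom hp_props(3) by blast
    have c2: "\<And>f. f \<in> ?S \<Longrightarrow> strict_mono (inv f)" using hom hp_props(6) by blast
    have c3: "\<And>f y. f \<in> ?S \<Longrightarrow> inv f (f y) = y" using hom hp_props(4) by blast
    show ?thesis using abstract_limit[of ?S F "pmf \<mu>" q1 q2, OF fin c1 c2 c3 Fmono Fbdd Ferr q1(1) q2(1) Fnd]
      that by blast
  qed
  have uv: "q1 - 1 \<le> q2" using q1 q2 ab by simp
  have "sets (interval_measure G) = sets borel
     \<and> (\<forall>K. compact K \<longrightarrow> emeasure (interval_measure G) K < \<infinity>)
     \<and> emeasure (interval_measure G) UNIV \<noteq> 0
     \<and> (\<forall>A\<in>sets borel. emeasure (interval_measure G) A =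
          (\<Sum>f\<in>?S. ennreal (pmf \<mu> f) * emeasure (interval_measure G) (f -` A)))"
    by (rule measure_from_G[OF fin hom Gmono Grc Geq _ uv Gnd]) simp
  then show ?thesis unfolding stationary_def by blast
qed


theorem mainTheorem15:
  fixes \<mu> :: "(real \<Rightarrow> real) pmf"
  assumes "finite (set_pmf \<mu>)"
    and "\<forall>f \<in> set_pmf \<mu>. homeo_plus f"
    and "recurrent \<mu>"
  shows "\<exists>\<nu> :: real measure. sets \<nu> = sets borel
           \<and> (\<forall>K. compact K \<longrightarrow> emeasure \<nu> K < \<infinity>)
           \<and> emeasure \<nu> UNIV \<noteq> 0
           \<and> stationary \<mu> \<nu>"
  using main_proof[OF assms] .

end
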